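(* Let $\mathcal{N}=\mathcal{N}_1\cup\mathcal{N}_2$ be a partition of a finite set of nodes (computing-bottleneck nodes $\mathcal{N}_1$, communication-bottleneck nodes $\mathcal{N}_2$), $B>0$, $\gamma\in(0,1]$, and $T_o$ a constant. For each $i$ let $a_i=q_ib_i+s_i$ and $P_i=k_ib_i+m_i$ be affine in the (real-valued) local batch size $b_i$, with $q_i+k_i>0$ for $i\in\mathcal{N}_1$ and $q_i+\gamma k_i>0$ for $i\in\mathcal{N}_2$. Consider the problem $$\min\ \mu\quad\text{s.t.}\quad a_i+P_i\le\mu\ (i\in\mathcal{N}_1),\quad a_i+\gamma P_i+T_o\le\mu\ (i\in\mathcal{N}_2),\quad \sum_{i\in\mathcal{N}}b_i=B.$$ Then at an optimal solution $\mu^*$, $a_i+P_i=\mu^*$ for all $i\in\mathcal{N}_1$ and $a_i+\gamma P_i+T_o=\mu^*$ for all $i\in\mathcal{N}_2$; i.e. all computing-bottleneck nodes have the same computing time $t_{compute}=a_i+P_i$, all communication-bottleneck nodes have the same first-bucket synchronization start $\mathit{syncStart}=a_i+\gamma P_i$, and $t_{compute}=\mathit{syncStart}+T_o$.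
   Context: Synchronous data-parallel training model: $a_i$ is the time for parameter update, data loading and forward propagation, $P_i$ the backpropagation time, $\gamma$ the overlap ratio, $T_o$ the synchronization time of all gradient buckets except the last, and $T_u$ that of the last bucket; the batch processing time is $\mu+T_u$, so minimizing $\mu$ minimizes batch processing time. *)

theory Defs
  imports Complex_Main
begin

definition feasible ::
  "'a set \<Rightarrow> 'a set \<Rightarrow> real \<Rightarrow> real \<Rightarrow> real \<Rightarrow>
   ('a \<Rightarrow> real) \<Rightarrow> ('a \<Rightarrow> real) \<Rightarrow> ('a \<Rightarrow> real) \<Rightarrow> ('a \<Rightarrow> real) \<Rightarrow>
   ('a \<Rightarrow> real) \<Rightarrow> real \<Rightarrow> bool" where
  "feasible N1 N2 B \<gamma> T\<^sub>o q s k m b \<mu> \<longleftrightarrow>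
     (\<forall>i\<in>N1. (q i * b i + s i) + (k i * b i + m i) \<le> \<mu>) \<and>
     (\<forall>i\<in>N2. (q i * b i + s i) + \<gamma> * (k i * b i + m i) + T\<^sub>o \<le> \<mu>) \<and>
     (\<Sum>i\<in>N1 \<union> N2. b i) = B"

definition optimal ::
  "'a set \<Rightarrow> 'a set \<Rightarrow> real \<Rightarrow> real \<Rightarrow> real \<Rightarrow>
   ('a \<Rightarrow> real) \<Rightarrow> ('a \<Rightarrow> real) \<Rightarrow> ('a \<Rightarrow> real) \<Rightarrow> ('a \<Rightarrow> real) \<Rightarrow>
   ('a \<Rightarrow> real) \<Rightarrow> real \<Rightarrow> bool" where
  "optimal N1 N2 B \<gamma> T\<^sub>o q s k m b \<mu> \<longleftrightarrow>
     feasible N1 N2 B \<gamma> T\<^sub>o q s k m b \<mu> \<and>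
     (\<forall>b' \<mu>'. feasible N1 N2 B \<gamma> T\<^sub>o q s k m b' \<mu>' \<longrightarrow> \<mu> \<le> \<mu>')"

end

theory Submission
  imports Defs
begin

theorem mainTheorem7:
  fixes N1 N2 :: "'a set" and B \<gamma> T\<^sub>o :: real
    and q s k m b :: "'a \<Rightarrow> real" and \<mu> :: real
  assumes "finite N1" and "finite N2" and "N1 \<inter> N2 = {}"
    and "B > 0" and "0 < \<gamma>" and "\<gamma> \<le> 1"
    and "\<forall>i\<in>N1. q i + k i > 0"
    and "\<forall>i\<in>N2. q i + \<gamma> * k i > 0"
    and "optimal N1 N2 B \<gamma> T\<^sub>o q s k m b \<mu>"
  shows "(\<forall>i\<in>N1. (q i * b i + s i) + (k i * b i + m i) = \<mu>) \<and>
         (\<forall>i\<in>N2. (q i * b i + s i) + \<gamma> * (k i * b i + m i) + T\<^sub>o = \<mu>)"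
proof -
  define N where "N = N1 \<union> N2"
  define F where "F i x = (if i \<in> N1 then (q i * x + s i) + (k i * x + m i)
     else (q i * x + s i) + \<gamma> * (k i * x + m i) + T\<^sub>o)" for i x
  define C where "C i = (if i \<in> N1 then q i + k i else q i + \<gamma> * k i)" for i
  have Fadd: "F i (x + t) = F i x + C i * t" for i x t
    unfolding F_def C_def by (auto simp: algebra_simps)
  have Cpos: "i \<in> N \<Longrightarrow> C i > 0" for i
    using assms(7,8) unfolding C_def N_def by auto
  have finN: "finite N" using assms(1,2) N_def by auto
  have feas: "feasible N1 N2 B \<gamma> T\<^sub>o q s k m b' \<mu>' \<longleftrightarrow>
      (\<forall>i\<in>N. F i (b' i) \<le> \<mu>') \<and> sum b' N = B" for b' \<mu>'
    using assms(3) unfolding feasible_def F_def N_def by auto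
  have opt: "\<forall>i\<in>N. F i (b i) \<le> \<mu>" "sum b N = B"
    and min: "\<And>b' \<mu>'. (\<forall>i\<in>N. F i (b' i) \<le> \<mu>') \<Longrightarrow> sum b' N = B \<Longrightarrow> \<mu> \<le> \<mu>'"
    using assms(9) feas unfolding optimal_def by auto
  have tight: "F j (b j) = \<mu>" if j: "j \<in> N" for j
  proof (rule ccontr)
    assume "F j (b j) \<noteq> \<mu>"
    with opt j have lt: "F j (b j) < \<mu>" by force
    define n where "n = card N"
    have n1: "n \<ge> 1" using j finN n_def by (metis One_nat_def Suc_leI card_gt_0_iff empty_iff)
    define d where "d = \<mu> - F j (b j)"
    have dpos: "d > 0" using lt d_def by simp
    have Cj: "C j > 0" using Cpos j by simp
    define e where "e = d / (2 * C j * real n)"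
    have epos: "e > 0" using dpos Cj n1 e_def by simp
    define b' where "b' i = (if i = j then b j + (real n - 1) * e else b i - e)" for i
    have "C j * ((real n - 1) * e) < d"
    proof -
      have "C j * ((real n - 1) * e) \<le> C j * (real n * e)"
        using Cj epos by (intro mult_left_mono) auto
      also have "\<dots> = d / 2" using Cj n1 unfolding e_def by (simp add: field_simps)
      finally show ?thesis using dpos by simp
    qed
    hence bj: "F j (b' j) < \<mu>" using Fadd[of j "b j" "(real n - 1) * e"] unfolding b'_def d_def by simp
    have bo: "F i (b' i) < \<mu>" if "i \<in> N" for i
    proof (cases "i = j")
      case True then show ?thesis using bj by simp
    next
      case False
      have "F i (b' i) = F i (b i) + C i * (- e)"
        using Fadd[of i "b i" "-e"] False unfolding b'_def by simp
      moreover have "C i * e > 0" using Cpos[OF that] epos by simp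
      ultimately show ?thesis using opt that by force
    qed
    have "sum b' N = b' j + sum b' (N - {j})" using finN j by (simp add: sum.remove)
    also have "sum b' (N - {j}) = sum (\<lambda>i. b i - e) (N - {j})"
      unfolding b'_def by (rule sum.cong) auto
    also have "\<dots> = sum b (N - {j}) - (real n - 1) * e"
      using finN j n_def using n1 by (simp add: sum_subtractf card_Diff_singleton of_nat_diff)
    finally have "sum b' N = b j + sum b (N - {j})" unfolding b'_def by simp
    also have "\<dots> = sum b N" using finN j by (simp add: sum.remove)
    finally have sb: "sum b' N = B" using opt by simp
    define M where "M = Max ((\<lambda>i. F i (b' i)) ` N)"
    have "M < \<mu>" unfolding M_def using finN j bo by (subst Max_less_iff) auto
    moreover have "\<forall>i\<in>N. F i (b' i) \<le> M" unfolding M_def using finN by auto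
    ultimately show False using min[OF _ sb, of M] by simp
  qed
  show ?thesis
  proof (intro conjI ballI)
    fix i assume "i \<in> N1" thus "(q i * b i + s i) + (k i * b i + m i) = \<mu>"
      using tight[of i] unfolding N_def F_def by auto
  next
    fix i assume "i \<in> N2" thus "(q i * b i + s i) + \<gamma> * (k i * b i + m i) + T\<^sub>o = \<mu>"
      using tight[of i] assms(3) unfolding N_def F_def by auto
  qed
qed

end
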